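(* Let $n\ge 2$ be an integer, $C\ge 4$ a constant, $Z$ a finite set, and $T_1,T_2$ rooted $Z$-trees with $\mathrm{Seq}(T_1)=\mathrm{Seq}(T_2)$. Let $Q_1,\dots,Q_k$ and $R_1,\dots,R_m$ be as defined in the context. Suppose $|Q_j|\le 2|Z|/C$ and $|R_l|\le 2|Z|/C$ for all $j,l$, and that at least one of $Q_1,\dots,Q_k,R_1,\dots,R_m$ has size at least $|Z|/\log n$. Then there exists a good pair $(x,Y)$ (with respect to $n$, $T_1$, $T_2$).
   Context: A rooted $Z$-tree is a binary rooted tree with a root of degree two, all other internal nodes of degree three, leaves bijectively labeled by $Z$, and each internal node having a designated left child and right child. $T_v$ is the subtree rooted at node $v$; $\mathrm{Le}(\cdot)$ is the leaf set; the size of a tree is its number of leaves. $x\preceq y$ means $x$ is a descendant of $y$ ($x\prec y$ if also $x\neq y$); $\mathrm{lca}_T(W)$ is the lowest node having all elements of $W$ as descendants. $\mathrm{Seq}(T)$ is the left-to-right leaf ordering given by pre-order traversal (left child before right child). Let $P_1=(u_1,\dots,u_k)$ be the path in $T_1$ from its left-most leaf $u_1$ to its root $u_k$; $Q_1:=$ the one-leaf tree $u_1$ and for $2\le j\le k$, $Q_j:=(T_1)_c$ with $c$ the child of $u_j$ other than $u_{j-1}$. Let $P_2=(w_1,\dots,w_m)$ be the path in $T_2$ from its root $w_1$ to its right-most leaf $w_m$; $R_m:=$ the one-leaf tree $w_m$ and for $1\le l<m$, $R_l:=(T_2)_c$ with $c$ the child of $w_l$ other than $w_{l+1}$. A good pair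 (with respect to $n$, $T_1$, $T_2$) is a pair $(x,Y)$ with $x\in Z$, $\emptyset\ne Y\subset Z$, such that $\mathrm{lca}_{T_1}(Y)\prec\mathrm{lca}_{T_1}(Y\cup\{x\})$, $\mathrm{lca}_{T_2}(Y)\prec\mathrm{lca}_{T_2}(Y\cup\{x\})$, and $|Y|\ge |Z|/(2\log n)$. $\log=\log_2$. *)

theory Defs
  imports Complex_Main "HOL-Library.Sublist"
begin

datatype 'a btree = Leaf 'a | Node "'a btree" "'a btree"

fun leaves :: "'a btree \<Rightarrow> 'a set" where
  "leaves (Leaf a) = {a}"
| "leaves (Node l r) = leaves l \<union> leaves r"

fun seq :: "'a btree \<Rightarrow> 'a list" where
  "seq (Leaf a) = [a]"
| "seq (Node l r) = seq l @ seq r"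

definition tsize :: "'a btree \<Rightarrow> nat" where
  "tsize t = card (leaves t)"

text \<open>Rooted Z-tree: root of degree two (an internal node), leaves bijectively labelled by Z.\<close>
definition is_ztree :: "'a set \<Rightarrow> 'a btree \<Rightarrow> bool" where
  "is_ztree Z t \<longleftrightarrow> (\<exists>l r. t = Node l r) \<and> distinct (seq t) \<and> set (seq t) = Z"

text \<open>Nodes are addressed by positions: paths from the root (False = left child, True = right child).\<close>
fun positions :: "'a btree \<Rightarrow> bool list set" where
  "positions (Leaf a) = {[]}"
| "positions (Node l r) = insert [] (Cons False ` positions l \<union> Cons True ` positions r)"

fun subt :: "'a btree \<Rightarrow> bool list \<Rightarrow> 'a btree" where
  "subt t [] = t"
| "subt (Node l r) (False # p) = subt l p"
| "subt (Node l r) (True # p) = subt r p"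
| "subt (Leaf a) (_ # p) = Leaf a"

definition desc :: "bool list \<Rightarrow> bool list \<Rightarrow> bool" where
  "desc p q \<longleftrightarrow> prefix q p"

definition sdesc :: "bool list \<Rightarrow> bool list \<Rightarrow> bool" where
  "sdesc p q \<longleftrightarrow> desc p q \<and> p \<noteq> q"

definition lca :: "'a btree \<Rightarrow> 'a set \<Rightarrow> bool list" where
  "lca t W = (THE v. v \<in> positions t \<and> W \<subseteq> leaves (subt t v) \<and>
      (\<forall>u \<in> positions t. W \<subseteq> leaves (subt t u) \<longrightarrow> desc v u))"

text \<open>[Q_1,...,Q_k]: the leftmost leaf, then the right subtrees hanging off the left spine,
  from bottom to root.\<close>
fun qlist :: "'a btree \<Rightarrow> 'a btree list" where
  "qlist (Leaf a) = [Leaf a]"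
| "qlist (Node l r) = qlist l @ [r]"

text \<open>[R_1,...,R_m]: the left subtrees hanging off the right spine from the root downwards,
  then the rightmost leaf.\<close>
fun rlist :: "'a btree \<Rightarrow> 'a btree list" where
  "rlist (Leaf a) = [Leaf a]"
| "rlist (Node l r) = l # rlist r"

definition good_pair :: "nat \<Rightarrow> 'a set \<Rightarrow> 'a btree \<Rightarrow> 'a btree \<Rightarrow> 'a \<Rightarrow> 'a set \<Rightarrow> bool" where
  "good_pair n Z T1 T2 x Y \<longleftrightarrow>
     x \<in> Z \<and> Y \<noteq> {} \<and> Y \<subset> Z \<and>
     sdesc (lca T1 Y) (lca T1 (Y \<union> {x})) \<and>
     sdesc (lca T2 Y) (lca T2 (Y \<union> {x})) \<and>
     real (card Y) \<ge> real (card Z) / (2 * log 2 (real n))"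

end

theory Submission imports Defs begin

lemma leaves_seq: "leaves t = set (seq t)"
  by (induction t) auto

lemma seq_ne: "seq t \<noteq> []"
  by (induction t) auto

lemma leaves_subt: "leaves (subt t p) \<subseteq> leaves t"
  by (induction t p rule: subt.induct) auto

lemma subt_Leaf: "subt (Leaf a) q = Leaf a"
  by (cases q) auto

lemma subt_append: "subt t (p @ q) = subt (subt t p) q"
proof (induction p arbitrary: t)
  case Nil then show ?case by simp
next
  case (Cons b p) then show ?case
    by (cases t; cases b) (simp_all add: subt_Leaf)
qed

lemma desc_leaves: "desc v p \<Longrightarrow> leaves (subt t v) \<subseteq> leaves (subt t p)"
proof -
  assume "desc v p"
  then obtain q where "v = p @ q" unfolding desc_def prefix_def by blast
  then show ?thesis using leaves_subt[of "subt t p" q] by (simp add: subt_append)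
qed

definition islca :: "'a btree \<Rightarrow> 'a set \<Rightarrow> bool list \<Rightarrow> bool" where
  "islca t W v \<longleftrightarrow> v \<in> positions t \<and> W \<subseteq> leaves (subt t v) \<and>
      (\<forall>u \<in> positions t. W \<subseteq> leaves (subt t u) \<longrightarrow> desc v u)"

lemma root_pos: "[] \<in> positions t"
  by (cases t) auto

lemma islca_exists: "distinct (seq t) \<Longrightarrow> W \<noteq> {} \<Longrightarrow> W \<subseteq> leaves t \<Longrightarrow> \<exists>v. islca t W v"
proof (induction t arbitrary: W)
  case (Leaf a)
  then have "islca (Leaf a) W []" by (auto simp: islca_def desc_def)
  then show ?case by blast
next
  case (Node l r)
  have dl: "distinct (seq l)" and dr: "distinct (seq r)" and dj: "leaves l \<inter> leaves r = {}"
    using Node.prems(1) by (auto simp: leaves_seq)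
  show ?case
  proof (cases "W \<subseteq> leaves l")
    case True
    then obtain v where v: "islca l W v" using Node.IH(1)[OF dl Node.prems(2)] by blast
    have "islca (Node l r) W (False # v)"
      unfolding islca_def
    proof (intro conjI ballI impI)
      show "False # v \<in> positions (Node l r)" using v by (auto simp: islca_def)
      show "W \<subseteq> leaves (subt (Node l r) (False # v))" using v by (auto simp: islca_def)
    next
      fix u assume u: "u \<in> positions (Node l r)" "W \<subseteq> leaves (subt (Node l r) u)"
      show "desc (False # v) u"
      proof (cases u)
        case Nil then show ?thesis by (simp add: desc_def)
      next
        case (Cons b u')
        show ?thesis
        proof (cases b)
          case True
          with u Cons have "W \<subseteq> leaves (subt r u')" by simp
          then have "W \<subseteq> leaves r" using leaves_subt[of r u'] by blast
          with \<open>W \<subseteq> leaves l\<close> dj Node.prems(2) show ?thesis by blast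
        next
          case False
          with u Cons have "u' \<in> positions l" "W \<subseteq> leaves (subt l u')" by auto
          with v have "desc v u'" by (auto simp: islca_def)
          with Cons False show ?thesis by (simp add: desc_def)
        qed
      qed
    qed
    then show ?thesis by blast
  next
    case notl: False
    show ?thesis
    proof (cases "W \<subseteq> leaves r")
      case True
      then obtain v where v: "islca r W v" using Node.IH(2)[OF dr Node.prems(2)] by blast
      have "islca (Node l r) W (True # v)"
        unfolding islca_def
      proof (intro conjI ballI impI)
        show "True # v \<in> positions (Node l r)" using v by (auto simp: islca_def)
        show "W \<subseteq> leaves (subt (Node l r) (True # v))" using v by (auto simp: islca_def)
      next
        fix u assume u: "u \<in> positions (Node l r)" "W \<subseteq> leaves (subt (Node l r) u)"
        show "desc (True # v) u"
        proof (cases u)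
          case Nil then show ?thesis by (simp add: desc_def)
        next
          case (Cons b u')
          show ?thesis
          proof (cases b)
            case False
            with u Cons have "W \<subseteq> leaves (subt l u')" by simp
            then have "W \<subseteq> leaves l" using leaves_subt[of l u'] by blast
            with notl show ?thesis by blast
          next
            case True
            with u Cons have "u' \<in> positions r" "W \<subseteq> leaves (subt r u')" by auto
            with v have "desc v u'" by (auto simp: islca_def)
            with Cons True show ?thesis by (simp add: desc_def)
          qed
        qed
      qed
      then show ?thesis by blast
    next
      case notr: False
      have "islca (Node l r) W []"
        unfolding islca_def
      proof (intro conjI ballI impI)
        show "[] \<in> positions (Node l r)" by simp
        show "W \<subseteq> leaves (subt (Node l r) [])" using Node.prems by simp
      next
        fix u assume u: "u \<in> positions (Node l r)" "W \<subseteq> leaves (subt (Node l r) u)"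
        show "desc [] u"
        proof (cases u)
          case Nil then show ?thesis by (simp add: desc_def)
        next
          case (Cons b u')
          then have "W \<subseteq> leaves l \<or> W \<subseteq> leaves r"
          proof (cases b)
            case True
            with u Cons have "W \<subseteq> leaves (subt r u')" by simp
            then show ?thesis using leaves_subt[of r u'] by blast
          next
            case False
            with u Cons have "W \<subseteq> leaves (subt l u')" by simp
            then show ?thesis using leaves_subt[of l u'] by blast
          qed
          with notl notr show ?thesis by blast
        qed
      qed
      then show ?thesis by blast
    qed
  qed
qed

lemma islca_lca: assumes "distinct (seq t)" "W \<noteq> {}" "W \<subseteq> leaves t"
  shows "islca t W (lca t W)"
proof -
  obtain v where v: "islca t W v" using islca_exists[OF assms] by blast
  have u: "\<And>w. islca t W w \<Longrightarrow> w = v"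
  proof -
    fix w assume w: "islca t W w"
    have "prefix v w" "prefix w v" using v w unfolding islca_def desc_def by blast+
    then show "w = v" using prefix_order.antisym by blast
  qed
  have e: "lca t W = (THE w. islca t W w)" by (simp add: lca_def islca_def)
  have "(THE w. islca t W w) = v" by (rule the_equality) (rule v, rule u)
  then have "lca t W = v" using e by simp
  then show ?thesis using v by simp
qed

definition clade :: "'a btree \<Rightarrow> 'a set \<Rightarrow> bool" where
  "clade t B \<longleftrightarrow> (\<exists>p \<in> positions t. leaves (subt t p) = B)"

lemma sdesc_step:
  assumes "distinct (seq t)" "Y \<noteq> {}" "Y \<subseteq> B" "clade t B" "x \<in> leaves t" "x \<notin> B"
  shows "sdesc (lca t Y) (lca t (Y \<union> {x}))"
proof -
  have "\<exists>p \<in> positions t. leaves (subt t p) = B" using assms(4) by (simp only: clade_def)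
  then obtain p where p: "p \<in> positions t" "leaves (subt t p) = B" by (elim bexE)
  have "B \<subseteq> leaves t" using p(2) leaves_subt[of t p] by simp
  then have Yl: "Y \<subseteq> leaves t" using assms(3) by (rule order_trans[rotated])
  have v: "islca t Y (lca t Y)" by (rule islca_lca[OF assms(1,2) Yl])
  have Yxl: "Y \<union> {x} \<subseteq> leaves t" using Yl assms(5) by simp
  have w: "islca t (Y \<union> {x}) (lca t (Y \<union> {x}))" by (rule islca_lca[OF assms(1) _ Yxl]) simp
  have "Y \<subseteq> leaves (subt t p)" using p(2) assms(3) by simp
  moreover have "\<forall>u\<in>positions t. Y \<subseteq> leaves (subt t u) \<longrightarrow> desc (lca t Y) u"
    using v by (simp add: islca_def)
  ultimately have "desc (lca t Y) p" using p(1) by blast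
  then have "leaves (subt t (lca t Y)) \<subseteq> leaves (subt t p)" by (rule desc_leaves)
  then have "leaves (subt t (lca t Y)) \<subseteq> B" using p(2) by simp
  then have 1: "x \<notin> leaves (subt t (lca t Y))" using assms(6) by blast
  have 2: "x \<in> leaves (subt t (lca t (Y \<union> {x})))" using w unfolding islca_def by simp
  have "Y \<subseteq> leaves (subt t (lca t (Y \<union> {x})))" using w unfolding islca_def by simp
  moreover have "lca t (Y \<union> {x}) \<in> positions t" using w by (simp add: islca_def)
  moreover have "\<forall>u\<in>positions t. Y \<subseteq> leaves (subt t u) \<longrightarrow> desc (lca t Y) u"
    using v by (simp add: islca_def)
  ultimately have 3: "desc (lca t Y) (lca t (Y \<union> {x}))" by blast
  show ?thesis unfolding sdesc_def using 1 2 3 by metis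
qed


lemma clade_root: "clade t (leaves t)"
  unfolding clade_def using root_pos[of t] by (intro bexI[of _ "[]"]) simp_all

lemma clade_liftl: "clade l B \<Longrightarrow> clade (Node l r) B"
proof -
  assume "clade l B"
  then obtain p where "p \<in> positions l" "leaves (subt l p) = B" unfolding clade_def by (elim bexE)
  then have "False # p \<in> positions (Node l r)" "leaves (subt (Node l r) (False # p)) = B" by simp_all
  then show ?thesis unfolding clade_def by (rule bexI[rotated])
qed

lemma clade_liftr: "clade r B \<Longrightarrow> clade (Node l r) B"
proof -
  assume "clade r B"
  then obtain p where "p \<in> positions r" "leaves (subt r p) = B" unfolding clade_def by (elim bexE)
  then have "True # p \<in> positions (Node l r)" "leaves (subt (Node l r) (True # p)) = B" by simp_all
  then show ?thesis unfolding clade_def by (rule bexI[rotated])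
qed

lemma clade_sub: "clade t B \<Longrightarrow> B \<subseteq> leaves t"
proof -
  assume "clade t B"
  then obtain p where "leaves (subt t p) = B" unfolding clade_def by (elim bexE)
  then show ?thesis using leaves_subt[of t p] by simp
qed

lemma clade_qlist: "S \<in> set (qlist t) \<Longrightarrow> clade t (leaves S)"
proof (induction t)
  case (Leaf a) then show ?case using clade_root[of "Leaf a"] by simp
next
  case (Node l r)
  show ?case
  proof (cases "S \<in> set (qlist l)")
    case True then show ?thesis using Node.IH(1) clade_liftl by blast
  next
    case False
    then have "S = r" using Node.prems by simp
    then show ?thesis using clade_liftr[OF clade_root[of r]] by simp
  qed
qed

lemma clade_rlist: "S \<in> set (rlist t) \<Longrightarrow> clade t (leaves S)"
proof (induction t)
  case (Leaf a) then show ?case using clade_root[of "Leaf a"] by simp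
next
  case (Node l r)
  show ?case
  proof (cases "S \<in> set (rlist r)")
    case True then show ?thesis using Node.IH(2) clade_liftr by blast
  next
    case False
    then have "S = l" using Node.prems by simp
    then show ?thesis using clade_liftl[OF clade_root[of l]] by simp
  qed
qed

lemma q_first: "distinct (seq t) \<Longrightarrow> S \<in> set (qlist t) \<Longrightarrow> hd (seq t) \<in> leaves S
   \<Longrightarrow> leaves S = {hd (seq t)}"
proof (induction t)
  case (Leaf a) then show ?case by simp
next
  case (Node l r)
  have h: "hd (seq (Node l r)) = hd (seq l)" using seq_ne[of l] by simp
  have dl: "distinct (seq l)" and dj: "leaves l \<inter> leaves r = {}"
    using Node.prems(1) by (auto simp: leaves_seq)
  have hl: "hd (seq l) \<in> leaves l" using seq_ne[of l] by (simp add: leaves_seq)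
  show ?case
  proof (cases "S \<in> set (qlist l)")
    case True then show ?thesis using Node.IH(1)[OF dl] Node.prems(3) h by simp
  next
    case False
    then have "S = r" using Node.prems by simp
    then have "hd (seq l) \<in> leaves r" using Node.prems(3) h by simp
    with hl dj show ?thesis by blast
  qed
qed

lemma r_last: "distinct (seq t) \<Longrightarrow> S \<in> set (rlist t) \<Longrightarrow> last (seq t) \<in> leaves S
   \<Longrightarrow> leaves S = {last (seq t)}"
proof (induction t)
  case (Leaf a) then show ?case by simp
next
  case (Node l r)
  have h: "last (seq (Node l r)) = last (seq r)" using seq_ne[of r] by simp
  have dr: "distinct (seq r)" and dj: "leaves l \<inter> leaves r = {}"
    using Node.prems(1) by (auto simp: leaves_seq)
  have hr: "last (seq r) \<in> leaves r" using seq_ne[of r] by (simp add: leaves_seq)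
  show ?case
  proof (cases "S \<in> set (rlist r)")
    case True then show ?thesis using Node.IH(2)[OF dr] Node.prems(3) h by simp
  next
    case False
    then have "S = l" using Node.prems by simp
    then have "last (seq r) \<in> leaves l" using Node.prems(3) h by simp
    with hr dj show ?thesis by blast
  qed
qed

lemma good_sym: "good_pair n Z T1 T2 x Y \<Longrightarrow> good_pair n Z T2 T1 x Y"
  unfolding good_pair_def by simp

lemma ztree_leaves: "is_ztree Z t \<Longrightarrow> leaves t = Z"
  unfolding is_ztree_def by (simp add: leaves_seq)

lemma ztree_dist: "is_ztree Z t \<Longrightarrow> distinct (seq t)"
  unfolding is_ztree_def by simp

lemma good_core:
  assumes ta: "is_ztree Z Ta" and tb: "is_ztree Z Tb" and Y: "Y \<noteq> {}" "Y \<subseteq> A" "clade Ta A"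
    "Y \<subseteq> B" "clade Tb B" and x: "x \<in> Z" "x \<notin> A" "x \<notin> B"
    and c: "real (card Y) \<ge> real (card Z) / (2 * log 2 (real n))"
  shows "good_pair n Z Ta Tb x Y"
proof -
  have A: "A \<subseteq> Z" using clade_sub[OF Y(3)] ztree_leaves[OF ta] by simp
  have "Y \<subset> Z" using Y(2) A x(1,2) by blast
  moreover have "sdesc (lca Ta Y) (lca Ta (Y \<union> {x}))"
    by (rule sdesc_step[OF ztree_dist[OF ta] Y(1,2,3)]) (use x ztree_leaves[OF ta] in simp_all)
  moreover have "sdesc (lca Tb Y) (lca Tb (Y \<union> {x}))"
    by (rule sdesc_step[OF ztree_dist[OF tb] Y(1,4,5)]) (use x ztree_leaves[OF tb] in simp_all)
  ultimately show ?thesis unfolding good_pair_def using x(1) Y(1) c by simp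
qed


lemma main_case:
  assumes ta: "is_ztree Z Ta" and tb: "is_ztree Z Tb" and fin: "finite Z" and n: "n \<ge> 2"
    and cA: "clade Ta A" and big: "real (card A) \<ge> real (card Z) / log 2 (real n)"
    and smallA: "real (card A) \<le> real (card Z) / 2"
    and cK: "clade Tb K" and cK': "clade Tb K'" and KK: "K \<union> K' = Z"
    and smallK: "real (card K) \<le> real (card Z) / 2"
    and e: "e \<in> K" "e \<notin> K'" "e \<notin> A \<or> A = {e}"
    and Zne: "Z \<noteq> {}"
  shows "\<exists>x Y. good_pair n Z Ta Tb x Y"
proof -
  have A: "A \<subseteq> Z" using clade_sub[OF cA] ztree_leaves[OF ta] by simp
  have K: "K \<subseteq> Z" using clade_sub[OF cK] ztree_leaves[OF tb] by simp
  have finA: "finite A" using A fin finite_subset by blast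
  have finK: "finite K" using K fin finite_subset by blast
  have lg: "log 2 (real n) > 0" using n by simp
  have cZ: "card Z > 0" using fin Zne by (simp add: card_gt_0_iff)
  have th: "real (card Z) / (2 * log 2 (real n)) > 0" using lg cZ by simp
  have halfA: "real (card A) / 2 \<ge> real (card Z) / (2 * log 2 (real n))"
    using big by (simp add: divide_simps)
  define Y1 where "Y1 = A \<inter> K"
  define Y2 where "Y2 = A \<inter> K'"
  have "A \<subseteq> Y1 \<union> Y2" using A KK unfolding Y1_def Y2_def by blast
  then have "card A \<le> card (Y1 \<union> Y2)" using finA unfolding Y1_def Y2_def by (intro card_mono) auto
  also have "\<dots> \<le> card Y1 + card Y2" by (rule card_Un_le)
  finally have sum: "real (card A) \<le> real (card Y1) + real (card Y2)" by linarith
  show ?thesis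
  proof (cases "real (card Y1) \<ge> real (card Y2)")
    case True
    then have c1: "real (card Y1) \<ge> real (card Z) / (2 * log 2 (real n))" using sum halfA by linarith
    then have "card Y1 > 0" using th by linarith
    then have Y1ne: "Y1 \<noteq> {}" by auto
    have "card (K \<union> A) + card (K \<inter> A) = card K + card A" using finK finA by (rule card_Un_Int[symmetric])
    moreover have "card (K \<inter> A) > 0" using \<open>card Y1 > 0\<close> unfolding Y1_def by (simp add: Int_commute)
    moreover have "real (card K) + real (card A) \<le> real (card Z)" using smallK smallA by linarith
    ultimately have "card (K \<union> A) < card Z" by linarith
    then have "K \<union> A \<noteq> Z" by auto
    then obtain x where x: "x \<in> Z" "x \<notin> K \<union> A" using A K by blast
    have "good_pair n Z Ta Tb x Y1"
      by (rule good_core[OF ta tb Y1ne _ cA _ cK x(1) _ _ c1]) (use x in \<open>auto simp: Y1_def\<close>)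
    then show ?thesis by blast
  next
    case False
    then have c2: "real (card Y2) \<ge> real (card Z) / (2 * log 2 (real n))" using sum halfA by linarith
    then have "card Y2 > 0" using th by linarith
    then have Y2ne: "Y2 \<noteq> {}" by auto
    have eA: "e \<notin> A"
    proof
      assume "e \<in> A"
      then have "A = {e}" using e(3) by blast
      then have "Y2 = {}" using e(2) unfolding Y2_def by blast
      then show False using Y2ne by simp
    qed
    have eZ: "e \<in> Z" using e(1) K by blast
    have "good_pair n Z Ta Tb e Y2"
      by (rule good_core[OF ta tb Y2ne _ cA _ cK' eZ eA e(2) c2]) (auto simp: Y2_def)
    then show ?thesis by blast
  qed
qed

theorem lemma3:
  fixes n :: nat and C :: real and Z :: "'a set" and T1 T2 :: "'a btree"
  assumes "n \<ge> 2" and "C \<ge> 4" and "finite Z"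
    and "is_ztree Z T1" and "is_ztree Z T2"
    and "seq T1 = seq T2"
    and "\<forall>Q \<in> set (qlist T1). real (tsize Q) \<le> 2 * real (card Z) / C"
    and "\<forall>R \<in> set (rlist T2). real (tsize R) \<le> 2 * real (card Z) / C"
    and "\<exists>S \<in> set (qlist T1) \<union> set (rlist T2). real (tsize S) \<ge> real (card Z) / log 2 (real n)"
  shows "\<exists>x Y. good_pair n Z T1 T2 x Y"
proof -
  have "set (seq T1) \<noteq> {}" using seq_ne[of T1] by simp
  moreover have "set (seq T1) = Z" using ztree_leaves[OF assms(4)] by (simp add: leaves_seq)
  ultimately have Zne: "Z \<noteq> {}" by simp
  have half: "2 * real (card Z) / C \<le> real (card Z) / 2" using assms(2)
    by (simp add: divide_simps) (metis mult.commute mult_right_mono of_nat_0_le_iff)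
  have d1: "distinct (seq T1)" and d2: "distinct (seq T2)" using assms(4,5) by (simp_all add: ztree_dist)
  obtain L1 R1 where T1: "T1 = Node L1 R1" using assms(4) unfolding is_ztree_def by blast
  obtain L2 R2 where T2: "T2 = Node L2 R2" using assms(5) unfolding is_ztree_def by blast
  obtain S where S: "S \<in> set (qlist T1) \<union> set (rlist T2)"
     "real (tsize S) \<ge> real (card Z) / log 2 (real n)" using assms(9) by blast
  show ?thesis
  proof (cases "S \<in> set (qlist T1)")
    case True
    have smallA: "real (card (leaves S)) \<le> real (card Z) / 2"
      using assms(7) True half unfolding tsize_def by fastforce
    have L2r: "L2 \<in> set (rlist T2)" using T2 by simp
    have smallK: "real (card (leaves L2)) \<le> real (card Z) / 2"
      using assms(8) L2r half unfolding tsize_def by fastforce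
    have KK: "leaves L2 \<union> leaves R2 = Z" using ztree_leaves[OF assms(5)] T2 by simp
    have dj: "leaves L2 \<inter> leaves R2 = {}" using d2 T2 by (auto simp: leaves_seq)
    have eq: "hd (seq T1) = hd (seq L2)" using assms(6) T2 seq_ne[of L2] by simp
    have eK: "hd (seq L2) \<in> leaves L2" using seq_ne[of L2] by (simp add: leaves_seq)
    have eK': "hd (seq L2) \<notin> leaves R2" using eK dj by blast
    have e3: "hd (seq L2) \<notin> leaves S \<or> leaves S = {hd (seq L2)}"
      using q_first[OF d1 True] eq by auto
    have c1: "clade T2 (leaves L2)" using clade_liftl[OF clade_root[of L2]] T2 by simp
    have c2: "clade T2 (leaves R2)" using clade_liftr[OF clade_root[of R2]] T2 by simp
    have bg: "real (card (leaves S)) \<ge> real (card Z) / log 2 (real n)" using S(2) by (simp add: tsize_def)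
    show ?thesis
      by (rule main_case[OF assms(4,5,3,1) clade_qlist[OF True] bg smallA c1 c2 KK smallK eK eK' e3 Zne])
  next
    case False
    then have SR: "S \<in> set (rlist T2)" using S(1) by blast
    have smallA: "real (card (leaves S)) \<le> real (card Z) / 2"
      using assms(8) SR half unfolding tsize_def by fastforce
    have R1q: "R1 \<in> set (qlist T1)" using T1 by simp
    have smallK: "real (card (leaves R1)) \<le> real (card Z) / 2"
      using assms(7) R1q half unfolding tsize_def by fastforce
    have KK: "leaves R1 \<union> leaves L1 = Z" using ztree_leaves[OF assms(4)] T1 by auto
    have dj: "leaves L1 \<inter> leaves R1 = {}" using d1 T1 by (auto simp: leaves_seq)
    have eq: "last (seq T2) = last (seq R1)" using assms(6)[symmetric] T1 seq_ne[of R1] by simp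
    have eK: "last (seq R1) \<in> leaves R1" using seq_ne[of R1] by (simp add: leaves_seq)
    have eK': "last (seq R1) \<notin> leaves L1" using eK dj by blast
    have e3: "last (seq R1) \<notin> leaves S \<or> leaves S = {last (seq R1)}"
      using r_last[OF d2 SR] eq by auto
    have c1: "clade T1 (leaves R1)" using clade_liftr[OF clade_root[of R1]] T1 by simp
    have c2: "clade T1 (leaves L1)" using clade_liftl[OF clade_root[of L1]] T1 by simp
    have bg: "real (card (leaves S)) \<ge> real (card Z) / log 2 (real n)" using S(2) by (simp add: tsize_def)
    have "\<exists>x Y. good_pair n Z T2 T1 x Y"
      by (rule main_case[OF assms(5,4,3,1) clade_rlist[OF SR] bg smallA c1 c2 KK smallK eK eK' e3 Zne])
    then obtain x Y where "good_pair n Z T2 T1 x Y" by blast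
    then have "good_pair n Z T1 T2 x Y" by (rule good_sym)
    then show ?thesis by blast
  qed
qed

end
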